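(* For $\epsilon>0$, $a\geq0$ with $\epsilon a$ belonging to a bounded interval, let $u_{\epsilon,a}$ be solutions of $\epsilon^2\Delta u+\mu u-|u|^2u+\epsilon af=0$ on $\mathbb{R}^2$ with $u_{\epsilon,a}(x)\to0$ as $|x|\to\infty$. Then the maps $u_{\epsilon,a}$ and $\epsilon\nabla u_{\epsilon,a}$ are uniformly bounded (on $\mathbb{R}^2$, uniformly in $\epsilon,a$).
   Context: $\mu\in C^\infty(\mathbb{R}^2,\mathbb{R})$ is radial, $\mu(x)=\mu_{\mathrm{rad}}(|x|)$, $\mu\in L^\infty$, $\mu_{\mathrm{rad}}'<0$ on $(0,\infty)$, $\mu_{\mathrm{rad}}(\rho)=0$ for a unique $\rho>0$ ($\mu_{\mathrm{rad}}$ smooth with an even extension). $f\in C^\infty(\mathbb{R}^2,\mathbb{R}^2)$, $f(x)=f_{\mathrm{rad}}(|x|)\frac{x}{|x|}$, $f_{\mathrm{rad}}$ smooth with an odd extension, $f\in L^1\cap L^\infty$, $f_{\mathrm{rad}}>0$ on $(0,\infty)$. *)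

theory Defs
  imports "HOL-Analysis.Analysis"
begin

definition smooth_real :: "(real \<Rightarrow> real) \<Rightarrow> bool" where
  "smooth_real g \<longleftrightarrow> (\<forall>n x. (deriv ^^ n) g field_differentiable (at x))"

definition partial :: "(real^2 \<Rightarrow> real^2) \<Rightarrow> real^2 \<Rightarrow> real^2 \<Rightarrow> real^2" where
  "partial u i x = frechet_derivative u (at x) i"

definition laplacian :: "(real^2 \<Rightarrow> real^2) \<Rightarrow> real^2 \<Rightarrow> real^2" where
  "laplacian u x = (\<Sum>i\<in>Basis. partial (partial u i) i x)"

definition is_solution ::
  "(real^2 \<Rightarrow> real) \<Rightarrow> (real^2 \<Rightarrow> real^2) \<Rightarrow> real \<Rightarrow> real \<Rightarrow> (real^2 \<Rightarrow> real^2) \<Rightarrow> bool" where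
  "is_solution \<mu> f \<epsilon> a u \<longleftrightarrow>
     (\<forall>x. u differentiable (at x)) \<and>
     (\<forall>i\<in>Basis. \<forall>x. partial u i differentiable (at x)) \<and>
     (\<forall>i\<in>Basis. \<forall>j\<in>Basis. continuous_on UNIV (partial (partial u i) j)) \<and>
     (\<forall>x. \<epsilon>\<^sup>2 *\<^sub>R laplacian u x + \<mu> x *\<^sub>R u x - (norm (u x))\<^sup>2 *\<^sub>R u x
          + (\<epsilon> * a) *\<^sub>R f x = 0) \<and>
     (u \<longlongrightarrow> 0) at_infinity"

end

theory Submission
  imports Defs
begin


lemma second_deriv_max:
  fixes g g' :: "real \<Rightarrow> real"
  assumes d: "d > 0"
    and der: "\<And>t. \<bar>t\<bar> < d \<Longrightarrow> (g has_real_derivative g' t) (at t)"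
    and der2: "(g' has_real_derivative D) (at 0)"
    and mx: "\<And>t. \<bar>t\<bar> < d \<Longrightarrow> g t \<le> g 0"
  shows "D \<le> 0"
proof (rule ccontr)
  assume "\<not> D \<le> 0"
  hence Dp: "D > 0" by simp
  have g0: "g' 0 = 0"
    using DERIV_local_max[OF der[of 0] d] mx d by (auto simp: abs_minus_commute)
  obtain e where e: "e > 0" "\<And>h. h > 0 \<Longrightarrow> h < e \<Longrightarrow> g' 0 < g' (0 + h)"
    using DERIV_pos_inc_right[OF der2 Dp] by blast
  define h where "h = min (e/2) (d/2)"
  have hp: "h > 0" "h < e" "h < d" using e d by (auto simp: h_def)
  obtain z where z: "0 < z" "z < h" "g h - g 0 = (h - 0) * g' z"
    using MVT2[of 0 h g g'] hp der by auto
  have "g' z > 0" using e(2)[of z] z hp g0 by simp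
  hence "h * g' z > 0" using hp(1) by simp
  hence "g h > g 0" using z by simp
  moreover have "g h \<le> g 0" using mx[of h] hp by simp
  ultimately show False by simp
qed

lemma Basis_real2: "(Basis :: (real^2) set) = {axis 1 1, axis 2 1}"
  unfolding Basis_vec_def by (auto simp: UNIV_2)

lemma axis12_neq: "axis (1::2) (1::real) \<noteq> axis 2 1"
  by (simp add: axis_eq_axis)

lemma sum_Basis_real2: "(\<Sum>i\<in>(Basis :: (real^2) set). F i) = F (axis 1 1) + F (axis 2 1)"
  by (simp add: Basis_real2 axis12_neq)

lemma frechet_partial:
  fixes f :: "real^2 \<Rightarrow> real^2"
  assumes "f differentiable (at p)"
  shows "frechet_derivative f (at p) w = (\<Sum>j\<in>Basis. (w \<bullet> j) *\<^sub>R partial f j p)"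
proof -
  have lin: "linear (frechet_derivative f (at p))"
    using assms frechet_derivative_works has_derivative_linear by blast
  have "frechet_derivative f (at p) w = frechet_derivative f (at p) (\<Sum>j\<in>Basis. (w \<bullet> j) *\<^sub>R j)"
    by (simp add: euclidean_representation)
  also have "\<dots> = (\<Sum>j\<in>Basis. (w \<bullet> j) *\<^sub>R frechet_derivative f (at p) j)"
    using lin by (simp add: linear_sum linear_scale)
  finally show ?thesis by (simp add: partial_def)
qed

lemma line_deriv:
  fixes u :: "real^2 \<Rightarrow> real^2"
  assumes "u differentiable (at (p + t *\<^sub>R w))"
  shows "((\<lambda>t. u (p + t *\<^sub>R w)) has_vector_derivative frechet_derivative u (at (p + t *\<^sub>R w)) w) (at t)"
proof -
  have d1: "(u has_derivative frechet_derivative u (at (p + t *\<^sub>R w))) (at (p + t *\<^sub>R w))"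
    using assms frechet_derivative_works by blast
  have lin: "linear (frechet_derivative u (at (p + t *\<^sub>R w)))"
    using d1 has_derivative_linear by blast
  have d2: "((\<lambda>t. p + t *\<^sub>R w) has_derivative (\<lambda>h. h *\<^sub>R w)) (at t)"
    by (auto intro!: derivative_eq_intros)
  have "((\<lambda>t. u (p + t *\<^sub>R w)) has_derivative (\<lambda>h. frechet_derivative u (at (p + t *\<^sub>R w)) (h *\<^sub>R w))) (at t)"
    using has_derivative_compose[OF d2 d1] by (simp add: o_def)
  thus ?thesis
    unfolding has_vector_derivative_def using lin by (simp add: linear_scale)
qed



definition Hq :: "(real^2 \<Rightarrow> real^2) \<Rightarrow> real^2 \<Rightarrow> real^2 \<Rightarrow> real^2" where
  "Hq u p w = (\<Sum>i\<in>Basis. (w \<bullet> i) *\<^sub>R (\<Sum>j\<in>Basis. (w \<bullet> j) *\<^sub>R partial (partial u i) j p))"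

lemma line_deriv2:
  fixes u :: "real^2 \<Rightarrow> real^2"
  assumes du: "\<forall>x. u differentiable (at x)"
    and dd: "\<forall>i\<in>Basis. \<forall>x. partial u i differentiable (at x)"
  shows "((\<lambda>t. frechet_derivative u (at (p + t *\<^sub>R w)) w) has_vector_derivative Hq u p w) (at 0)"
proof -
  have eq: "(\<lambda>t. frechet_derivative u (at (p + t *\<^sub>R w)) w) =
        (\<lambda>t. \<Sum>i\<in>Basis. (w \<bullet> i) *\<^sub>R partial u i (p + t *\<^sub>R w))"
    using frechet_partial du by blast
  have "((\<lambda>t. \<Sum>i\<in>Basis. (w \<bullet> i) *\<^sub>R partial u i (p + t *\<^sub>R w)) has_vector_derivative
        (\<Sum>i\<in>Basis. (w \<bullet> i) *\<^sub>R frechet_derivative (partial u i) (at (p + 0 *\<^sub>R w)) w)) (at 0)"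
    apply (rule has_vector_derivative_sum)
    apply (rule bounded_linear.has_vector_derivative[OF bounded_linear_scaleR_right])
    apply (rule line_deriv)
    using dd by blast
  moreover have "\<And>i. i \<in> Basis \<Longrightarrow> frechet_derivative (partial u i) (at (p + 0 *\<^sub>R w)) w
        = (\<Sum>j\<in>Basis. (w \<bullet> j) *\<^sub>R partial (partial u i) j p)"
    using frechet_partial dd by simp
  ultimately show ?thesis unfolding eq Hq_def by simp
qed

lemma scal_line1:
  fixes u :: "real^2 \<Rightarrow> real^2"
  assumes du: "\<forall>x. u differentiable (at x)"
  shows "((\<lambda>t. c \<bullet> u (p + t *\<^sub>R w)) has_real_derivative c \<bullet> frechet_derivative u (at (p + t *\<^sub>R w)) w) (at t)"
  unfolding has_real_derivative_iff_has_vector_derivative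
  by (rule bounded_linear.has_vector_derivative[OF bounded_linear_inner_right], rule line_deriv, simp add: du)

lemma scal_line2:
  fixes u :: "real^2 \<Rightarrow> real^2"
  assumes du: "\<forall>x. u differentiable (at x)"
    and dd: "\<forall>i\<in>Basis. \<forall>x. partial u i differentiable (at x)"
  shows "((\<lambda>t. c \<bullet> frechet_derivative u (at (p + t *\<^sub>R w)) w) has_real_derivative c \<bullet> Hq u p w) (at 0)"
  unfolding has_real_derivative_iff_has_vector_derivative
  by (rule bounded_linear.has_vector_derivative[OF bounded_linear_inner_right], rule line_deriv2[OF du dd])

lemma Hq_sum:
  fixes \<nu> :: "real^2"
  assumes "norm \<nu> = 1"
  shows "Hq u p \<nu> + Hq u p (vector [- (\<nu>$2), \<nu>$1]) = laplacian u p"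
proof -
  have n: "(\<nu>$1)^2 + (\<nu>$2)^2 = 1"
    using assms unfolding norm_eq_sqrt_inner by (simp add: inner_vec_def sum_2 power2_eq_square)
  define a where "a = \<nu>$1"
  define b where "b = \<nu>$2"
  have "Hq u p \<nu> + Hq u p (vector [- (\<nu>$2), \<nu>$1]) =
     (a^2 + b^2) *\<^sub>R partial (partial u (axis 1 1)) (axis 1 1) p
   + (a^2 + b^2) *\<^sub>R partial (partial u (axis 2 1)) (axis 2 1) p"
    unfolding Hq_def sum_Basis_real2 a_def b_def
    by (simp add: inner_axis algebra_simps power2_eq_square scaleR_add_left)
  also have "\<dots> = laplacian u p"
    using n unfolding laplacian_def sum_Basis_real2 a_def b_def by simp
  finally show ?thesis .
qed



lemma attain_max:
  fixes g :: "'a::euclidean_space \<Rightarrow> real"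
  assumes c: "continuous_on UNIV g" and b: "bounded {z. g z \<ge> g x0}"
  shows "\<exists>z. \<forall>y. g y \<le> g z"
proof -
  let ?K = "{z. g z \<ge> g x0}"
  have "closed ?K"
    using c by (intro closed_Collect_le) (auto intro: continuous_intros)
  hence "compact ?K" using b by (simp add: compact_eq_bounded_closed)
  moreover have "?K \<noteq> {}" by auto
  moreover have "continuous_on ?K g" using c by (rule continuous_on_subset) simp
  ultimately obtain z where z: "z \<in> ?K" "\<forall>y\<in>?K. g y \<le> g z"
    using continuous_attains_sup by blast
  show ?thesis
  proof (intro exI allI)
    fix y show "g y \<le> g z"
      using z by (cases "y \<in> ?K") auto
  qed
qed

lemma sol_cont:
  fixes u :: "real^2 \<Rightarrow> real^2"
  assumes "\<forall>x. u differentiable (at x)"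
  shows "continuous_on UNIV u"
  using assms by (simp add: continuous_at_imp_continuous_on differentiable_imp_continuous_within)

lemma Hq_axis:
  "Hq u p (axis 1 1) + Hq u p (axis 2 1) = laplacian u p"
  unfolding Hq_def laplacian_def sum_Basis_real2 by (simp add: inner_axis_axis)

lemma sup_bound:
  fixes u :: "real^2 \<Rightarrow> real^2"
  assumes sol: "is_solution \<mu> f \<epsilon> a u" and ep: "\<epsilon> > 0" and a: "a \<ge> 0" and aM: "\<epsilon> * a \<le> M"
    and Bm: "\<And>x. \<bar>\<mu> x\<bar> \<le> Bm" and F: "\<And>x. norm (f x) \<le> F"
    and M: "M \<ge> 0"
  shows "norm (u x) \<le> 1 + Bm + M * F"
proof (cases "u x = 0")
  case True
  have "0 \<le> Bm" using Bm[of x] by simp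
  moreover have "0 \<le> F" using F[of x] norm_ge_zero order_trans by blast
  ultimately show ?thesis using True M by simp
next
  case False
  have du: "\<forall>x. u differentiable (at x)"
    and dd: "\<forall>i\<in>Basis. \<forall>x. partial u i differentiable (at x)"
    and eq: "\<And>x. \<epsilon>\<^sup>2 *\<^sub>R laplacian u x + \<mu> x *\<^sub>R u x - (norm (u x))\<^sup>2 *\<^sub>R u x + (\<epsilon> * a) *\<^sub>R f x = 0"
    and lim: "(u \<longlongrightarrow> 0) at_infinity"
    using sol unfolding is_solution_def by auto
  define N where "N z = u z \<bullet> u z" for z
  have cN: "continuous_on UNIV N"
    unfolding N_def using sol_cont[OF du] by (auto intro: continuous_intros)
  have Nx: "N x > 0" using False by (simp add: N_def)
  have "\<forall>\<^sub>F z in at_infinity. norm (u z) < norm (u x)"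
    using lim False by (auto simp: tendsto_iff dist_norm)
  then obtain R where R: "\<And>z. norm z \<ge> R \<Longrightarrow> norm (u z) < norm (u x)"
    unfolding eventually_at_infinity by blast
  have "{z. N z \<ge> N x} \<subseteq> cball 0 R"
  proof
    fix z assume "z \<in> {z. N z \<ge> N x}"
    hence "norm (u z) \<ge> norm (u x)"
      by (simp add: N_def norm_eq_sqrt_inner real_sqrt_le_iff)
    thus "z \<in> cball 0 R" using R[of z] by force
  qed
  hence "bounded {z. N z \<ge> N x}" using bounded_cball bounded_subset by blast
  then obtain z where z: "\<And>y. N y \<le> N z" using attain_max[OF cN] by blast
  have key: "u z \<bullet> Hq u z i \<le> 0" if i: "i \<in> Basis" for i
  proof -
    define D where "D t = frechet_derivative u (at (z + t *\<^sub>R i)) i" for t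
    have d1: "((\<lambda>t. N (z + t *\<^sub>R i)) has_real_derivative
          (u (z + t *\<^sub>R i) \<bullet> D t + D t \<bullet> u (z + t *\<^sub>R i))) (at t)" for t
      unfolding N_def has_real_derivative_iff_has_vector_derivative D_def
      by (rule bounded_bilinear.has_vector_derivative[OF bounded_bilinear_inner];
          rule line_deriv; simp add: du)
    have D2: "(D has_vector_derivative Hq u z i) (at 0)"
      unfolding D_def using line_deriv2[OF du dd, of z i] by simp
    have U1: "((\<lambda>t. u (z + t *\<^sub>R i)) has_vector_derivative D 0) (at 0)"
      unfolding D_def using line_deriv[of u z 0 i] du by simp
    have d2: "((\<lambda>t. u (z + t *\<^sub>R i) \<bullet> D t + D t \<bullet> u (z + t *\<^sub>R i)) has_real_derivative
         ((u z \<bullet> Hq u z i + D 0 \<bullet> D 0) + (D 0 \<bullet> D 0 + Hq u z i \<bullet> u z))) (at 0)"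
      unfolding has_real_derivative_iff_has_vector_derivative
      apply (rule has_vector_derivative_add)
      using bounded_bilinear.has_vector_derivative[OF bounded_bilinear_inner U1 D2]
       apply simp
      using bounded_bilinear.has_vector_derivative[OF bounded_bilinear_inner D2 U1]
      apply simp
      done
    have "(u z \<bullet> Hq u z i + D 0 \<bullet> D 0) + (D 0 \<bullet> D 0 + Hq u z i \<bullet> u z) \<le> 0"
      apply (rule second_deriv_max[where d=1, OF _ d1 d2])
      using z by auto
    moreover have "D 0 \<bullet> D 0 \<ge> 0" by simp
    moreover have "Hq u z i \<bullet> u z = u z \<bullet> Hq u z i" by (simp add: inner_commute)
    ultimately show ?thesis by linarith
  qed
  have "u z \<bullet> laplacian u z \<le> 0"
    using key[of "axis 1 1"] key[of "axis 2 1"] unfolding Hq_axis[symmetric, of u z]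
    by (simp add: Basis_real2 inner_add_right)
  define s where "s = norm (u z)"
  have "u z \<bullet> (\<epsilon>\<^sup>2 *\<^sub>R laplacian u z + \<mu> z *\<^sub>R u z - (norm (u z))\<^sup>2 *\<^sub>R u z + (\<epsilon> * a) *\<^sub>R f z) = 0"
    using eq[of z] by simp
  hence e2: "\<epsilon>\<^sup>2 * (u z \<bullet> laplacian u z) + \<mu> z * s^2 - s^4 + (\<epsilon> * a) * (u z \<bullet> f z) = 0"
    by (simp add: inner_add_right inner_diff_right s_def power2_norm_eq_inner[symmetric]
        flip: power2_norm_eq_inner)
  have F0: "F \<ge> 0" using F[of x] norm_ge_zero order_trans by blast
  have s0: "s \<ge> 0" by (simp add: s_def)
  have "u z \<bullet> f z \<le> s * F"
    using norm_cauchy_schwarz[of "u z" "f z"] F[of z] s0 unfolding s_def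
    by (meson mult_left_mono order_trans)
  hence t1: "(\<epsilon> * a) * (u z \<bullet> f z) \<le> M * (s * F)"
    using ep a aM s0 F0 by (meson mult_left_mono mult_nonneg_nonneg mult_right_mono order_trans less_imp_le)
  have t2: "\<mu> z * s^2 \<le> Bm * s^2" using Bm[of z] by (intro mult_right_mono) auto
  have t3: "\<epsilon>\<^sup>2 * (u z \<bullet> laplacian u z) \<le> 0"
    using \<open>u z \<bullet> laplacian u z \<le> 0\<close> by (simp add: mult_nonneg_nonpos)
  have main: "s^4 \<le> Bm * s^2 + M * F * s" using e2 t1 t2 t3 by (simp add: algebra_simps)
  have sB: "s \<le> 1 + Bm + M * F"
  proof (cases "s \<le> 1")
    case True thus ?thesis using F0 M Bm[of x] by (smt (verit) abs_ge_zero mult_nonneg_nonneg)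
  next
    case False
    hence "M * F * s \<le> M * F * s^2" using M F0
      by (intro mult_left_mono) (auto simp: power2_eq_square)
    hence "s^2 * s^2 \<le> (Bm + M * F) * s^2" using main by (simp add: algebra_simps power2_eq_square power4_eq_xxxx)
    moreover have "s^2 > 0" using False by simp
    ultimately have "s^2 \<le> Bm + M * F" using mult_le_cancel_right_pos by blast
    moreover have "s \<le> s^2" using False by (simp add: power2_eq_square)
    ultimately show ?thesis by simp
  qed
  have "N x \<le> N z" using z by blast
  hence "norm (u x) \<le> s" unfolding N_def s_def by (simp add: norm_eq_sqrt_inner)
  thus ?thesis using sB by simp
qed



lemma Hq_neg: "Hq u p (- w) = Hq u p w"
  unfolding Hq_def by (simp add: sum_negf)

lemma exp_half:
  fixes s :: real assumes "s \<ge> 0" "exp (- s) > 1/2" shows "s < 1"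
proof -
  have "1 + s \<le> exp s" by (rule exp_ge_add_one_self)
  hence "exp (- s) \<le> 1 / (1 + s)" using assms by (simp add: exp_minus field_simps)
  hence "1/2 < 1/(1+s)" using assms by linarith
  thus ?thesis using assms by (simp add: field_simps)
qed

lemma inner_le_norm1:
  fixes c v :: "'a::real_inner"
  assumes "norm c \<le> 1" shows "\<bar>c \<bullet> v\<bar> \<le> norm v"
proof -
  have "\<bar>c \<bullet> v\<bar> \<le> norm c * norm v" by (rule Cauchy_Schwarz_ineq2)
  also have "\<dots> \<le> 1 * norm v" using assms by (intro mult_right_mono) auto
  finally show ?thesis by simp
qed

lemma lip_main:
  fixes u :: "real^2 \<Rightarrow> real^2"
  assumes du: "\<forall>x. u differentiable (at x)"
    and dd: "\<forall>i\<in>Basis. \<forall>x. partial u i differentiable (at x)"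
    and lim: "(u \<longlongrightarrow> 0) at_infinity"
    and ep: "\<epsilon> > 0"
    and A: "\<And>x. norm (u x) \<le> A"
    and B: "\<And>x. norm (\<epsilon>\<^sup>2 *\<^sub>R laplacian u x) \<le> B"
    and L: "L = 4 * A + B + 1"
    and c: "norm c \<le> 1"
  shows "c \<bullet> u x - c \<bullet> u y \<le> L * (1 - exp (- (norm (x - y) / \<epsilon>)))"
proof (rule ccontr)
  define \<Phi> where "\<Phi> p = c \<bullet> u (fst p) - c \<bullet> u (snd p) - L * (1 - exp (- (norm (fst p - snd p) / \<epsilon>)))"
    for p :: "(real^2) \<times> (real^2)"
  assume "\<not> ?thesis"
  hence P0: "\<Phi> (x, y) > 0" by (simp add: \<Phi>_def)
  define P where "P = \<Phi> (x, y)"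
  have A0: "A \<ge> 0" using A[of 0] norm_ge_zero order_trans by blast
  have B0: "B \<ge> 0" using B[of 0] norm_ge_zero order_trans by blast
  have Lp: "L > 0" "L \<ge> 4 * A" "L > B" using A0 B0 L by auto
  have cu: "\<bar>c \<bullet> u z\<bar> \<le> A" for z
    using inner_le_norm1[OF c, of "u z"] A[of z] by linarith
  have cl: "\<bar>c \<bullet> (\<epsilon>\<^sup>2 *\<^sub>R laplacian u z)\<bar> \<le> B" for z
    using inner_le_norm1[OF c, of "\<epsilon>\<^sup>2 *\<^sub>R laplacian u z"] B[of z] by linarith
  have cont_u: "continuous_on UNIV u" using sol_cont[OF du] .
  have cont: "continuous_on UNIV \<Phi>"
    unfolding \<Phi>_def
    by (intro continuous_intros continuous_on_compose2[OF cont_u]) (use ep in auto)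
  have inK: "norm (fst p - snd p) < \<epsilon> \<and> exp (- (norm (fst p - snd p) / \<epsilon>)) > 1/2"
    if "\<Phi> p \<ge> P" for p
  proof -
    let ?s = "norm (fst p - snd p) / \<epsilon>"
    have "L * (1 - exp (- ?s)) < 2 * A"
      using that P0 cu[of "fst p"] cu[of "snd p"] unfolding P_def \<Phi>_def by linarith
    also have "\<dots> \<le> L / 2" using Lp by simp
    finally have "1 - exp (- ?s) < 1/2" using Lp by (simp add: field_simps)
    hence e: "exp (- ?s) > 1/2" by simp
    have "?s < 1" by (rule exp_half) (use ep e in auto)
    thus ?thesis using ep e by (simp add: field_simps)
  qed
  have "\<forall>\<^sub>F z in at_infinity. norm (u z) < P / 2"
  proof -
    have "P/2 > 0" using P0 P_def by simp
    hence "\<forall>\<^sub>F z in at_infinity. dist (u z) 0 < P/2" using lim unfolding tendsto_iff by blast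
    thus ?thesis by (simp add: dist_norm)
  qed
  then obtain R where R: "\<And>z. norm z \<ge> R \<Longrightarrow> norm (u z) < P / 2"
    unfolding eventually_at_infinity by blast
  have "{p. \<Phi> p \<ge> P} \<subseteq> cball 0 (2 * \<bar>R\<bar> + 3 * \<epsilon>)"
  proof
    fix p assume pK: "p \<in> {p. \<Phi> p \<ge> P}"
    obtain a b where ab: "p = (a, b)" by (cases p)
    have r: "norm (a - b) < \<epsilon>" using inK[of p] pK ab by simp
    have na: "norm a < R + \<epsilon>"
    proof (rule ccontr)
      assume "\<not> ?thesis"
      hence "norm a \<ge> R" "norm b \<ge> R" using r ep norm_triangle_ineq2[of a b] by auto
      hence "\<bar>c \<bullet> u a\<bar> < P/2" "\<bar>c \<bullet> u b\<bar> < P/2"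
        using R[of a] R[of b] inner_le_norm1[OF c, of "u a"] inner_le_norm1[OF c, of "u b"] by linarith+
      moreover have "exp (- (norm (a - b) / \<epsilon>)) \<le> 1" using ep by simp
      moreover have "L * (1 - exp (- (norm (a - b) / \<epsilon>))) \<ge> 0" using Lp calculation(3) by simp
      ultimately have "\<Phi> p < P" unfolding \<Phi>_def ab by simp
      thus False using pK by simp
    qed
    have nb: "norm b < R + 2 * \<epsilon>" using na r norm_triangle_ineq2[of b a] norm_minus_commute[of a b] by linarith
    have "norm p \<le> norm a + norm b" unfolding ab by (rule norm_Pair_le)
    thus "p \<in> cball 0 (2 * \<bar>R\<bar> + 3 * \<epsilon>)" using na nb by auto
  qed
  hence "bounded {p. \<Phi> p \<ge> \<Phi> (x, y)}" unfolding P_def using bounded_cball bounded_subset by blast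
  then obtain q where q: "\<And>p. \<Phi> p \<le> \<Phi> q" using attain_max[OF cont] by blast
  obtain xb yb where qab: "q = (xb, yb)" by (cases q)
  have qK: "\<Phi> q \<ge> P" using q[of "(x,y)"] P_def by simp
  define r where "r = norm (xb - yb)"
  have rK: "r < \<epsilon>" "exp (- (r / \<epsilon>)) > 1/2" using inK[OF qK] qab r_def by auto
  have "r \<noteq> 0"
  proof
    assume "r = 0"
    hence "\<Phi> q = 0" unfolding \<Phi>_def qab r_def by simp
    thus False using qK P0 P_def by simp
  qed
  hence rp: "r > 0" unfolding r_def by simp
  define \<nu> where "\<nu> = (1 / r) *\<^sub>R (xb - yb)"
  have n\<nu>: "norm \<nu> = 1" using rp unfolding \<nu>_def r_def by simp
  have xy: "xb - yb = r *\<^sub>R \<nu>" using rp unfolding \<nu>_def by simp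
  have Phiq: "\<Phi> p \<le> \<Phi> (xb, yb)" for p using q[of p] qab by simp
  define E where "E t = L * (1 - exp (- ((r + 2 * t) / \<epsilon>)))" for t
  define E' where "E' t = L * (exp (- ((r + 2 * t) / \<epsilon>)) * (2 / \<epsilon>))" for t
  have dE: "(E has_real_derivative E' t) (at t)" for t
    unfolding E_def E'_def using ep
    by (auto intro!: derivative_eq_intros simp: field_simps)
  have dE': "(E' has_real_derivative (- 4 * L * exp (- (r / \<epsilon>)) / \<epsilon>\<^sup>2)) (at 0)"
    unfolding E'_def using ep
    by (auto intro!: derivative_eq_intros simp: field_simps power2_eq_square)
  define G1 where "G1 t = c \<bullet> u (xb + t *\<^sub>R \<nu>) - c \<bullet> u (yb + t *\<^sub>R (- \<nu>)) - E t" for t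
  define G1' where "G1' t = c \<bullet> frechet_derivative u (at (xb + t *\<^sub>R \<nu>)) \<nu>
      - c \<bullet> frechet_derivative u (at (yb + t *\<^sub>R (- \<nu>))) (- \<nu>) - E' t" for t
  have G1eq: "G1 t = \<Phi> (xb + t *\<^sub>R \<nu>, yb + t *\<^sub>R (- \<nu>))" if "\<bar>t\<bar> < r / 2" for t
  proof -
    have "xb + t *\<^sub>R \<nu> - (yb + t *\<^sub>R (- \<nu>)) = (r + 2 * t) *\<^sub>R \<nu>"
      using xy by (simp add: vec_eq_iff algebra_simps)
    moreover have "norm ((r + 2 * t) *\<^sub>R \<nu>) = r + 2 * t" using n\<nu> that by simp
    ultimately show ?thesis unfolding G1_def \<Phi>_def E_def by simp
  qed
  have dG1: "(G1 has_real_derivative G1' t) (at t)" for t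
    unfolding G1_def G1'_def
    by (intro DERIV_diff dE scal_line1[OF du])
  have dG1': "(G1' has_real_derivative (c \<bullet> Hq u xb \<nu> - c \<bullet> Hq u yb \<nu> + 4 * L * exp (- (r / \<epsilon>)) / \<epsilon>\<^sup>2)) (at 0)"
    using DERIV_diff[OF DERIV_diff[OF scal_line2[OF du dd, of c xb \<nu>] scal_line2[OF du dd, of c yb "- \<nu>"]] dE']
    unfolding G1'_def Hq_neg by simp
  have D1: "c \<bullet> Hq u xb \<nu> - c \<bullet> Hq u yb \<nu> + 4 * L * exp (- (r / \<epsilon>)) / \<epsilon>\<^sup>2 \<le> 0"
  proof (rule second_deriv_max[where d="r/2", OF _ dG1 dG1'])
    show "r / 2 > 0" using rp by simp
    fix t assume "\<bar>t\<bar> < r / 2"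
    thus "G1 t \<le> G1 0" using G1eq[of t] G1eq[of 0] rp Phiq by simp
  qed
  define e where "e = (vector [- (\<nu>$2), \<nu>$1] :: real^2)"
  define G2 where "G2 t = c \<bullet> u (xb + t *\<^sub>R e) - c \<bullet> u (yb + t *\<^sub>R e) - E 0" for t
  define G2' where "G2' t = c \<bullet> frechet_derivative u (at (xb + t *\<^sub>R e)) e
      - c \<bullet> frechet_derivative u (at (yb + t *\<^sub>R e)) e" for t
  have G2eq: "G2 t = \<Phi> (xb + t *\<^sub>R e, yb + t *\<^sub>R e)" for t
    unfolding G2_def \<Phi>_def E_def r_def by simp
  have dG2: "(G2 has_real_derivative G2' t) (at t)" for t
    unfolding G2_def G2'_def
    using DERIV_diff[OF DERIV_diff[OF scal_line1[OF du, of c xb e t] scal_line1[OF du, of c yb e t]] DERIV_const]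
    by simp
  have dG2': "(G2' has_real_derivative (c \<bullet> Hq u xb e - c \<bullet> Hq u yb e)) (at 0)"
    unfolding G2'_def by (intro DERIV_diff scal_line2[OF du dd])
  have D2: "c \<bullet> Hq u xb e - c \<bullet> Hq u yb e \<le> 0"
  proof (rule second_deriv_max[where d=1, OF _ dG2 dG2'])
    fix t show "G2 t \<le> G2 0" using G2eq[of t] G2eq[of 0] Phiq by simp
  qed simp
  have lapineq: "c \<bullet> laplacian u xb - c \<bullet> laplacian u yb + 4 * L * exp (- (r / \<epsilon>)) / \<epsilon>\<^sup>2 \<le> 0"
  proof -
    have "c \<bullet> laplacian u xb = c \<bullet> Hq u xb \<nu> + c \<bullet> Hq u xb e"
      unfolding e_def Hq_sum[OF n\<nu>, of u xb, symmetric] by (rule inner_add_right)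
    moreover have "c \<bullet> laplacian u yb = c \<bullet> Hq u yb \<nu> + c \<bullet> Hq u yb e"
      unfolding e_def Hq_sum[OF n\<nu>, of u yb, symmetric] by (rule inner_add_right)
    ultimately show ?thesis using D1 D2 by linarith
  qed
  hence "\<epsilon>\<^sup>2 * (c \<bullet> laplacian u xb - c \<bullet> laplacian u yb) + 4 * L * exp (- (r / \<epsilon>)) \<le> 0"
  proof -
    have "\<epsilon>\<^sup>2 * (c \<bullet> laplacian u xb - c \<bullet> laplacian u yb + 4 * L * exp (- (r / \<epsilon>)) / \<epsilon>\<^sup>2) \<le> 0"
      using ep lapineq by (intro mult_nonneg_nonpos) auto
    thus ?thesis using ep by (simp add: distrib_left)
  qed
  moreover have "\<epsilon>\<^sup>2 * (c \<bullet> laplacian u xb - c \<bullet> laplacian u yb) \<ge> - 2 * B"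
    using cl[of xb] cl[of yb] by (simp add: right_diff_distrib)
  moreover have "4 * L * exp (- (r / \<epsilon>)) > 2 * L" using rK(2) Lp by simp
  ultimately show False using Lp by linarith
qed



lemma onorm_from_lip:
  fixes u :: "real^2 \<Rightarrow> real^2"
  assumes du: "\<forall>x. u differentiable (at x)"
    and lip: "\<And>y. norm (u y - u x) \<le> K * norm (y - x)"
  shows "onorm (frechet_derivative u (at x)) \<le> K"
proof (rule onorm_le)
  fix h :: "real^2"
  let ?D = "frechet_derivative u (at x)"
  show "norm (?D h) \<le> K * norm h"
  proof (cases "h = 0")
    case True
    have "linear ?D" using du frechet_derivative_works has_derivative_linear by blast
    thus ?thesis using True by (simp add: linear_0)
  next
    case hn: False
    have K0: "K \<ge> 0"
    proof -
      have "0 \<le> K * norm h" using lip[of "x + h"] norm_ge_zero[of "u (x + h) - u x"] by (simp del: norm_ge_zero)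
      thus ?thesis using hn by (simp add: zero_le_mult_iff)
    qed
    show ?thesis
    proof (cases "?D h = 0")
      case True thus ?thesis using K0 by simp
    next
      case False
      define c where "c = (1 / norm (?D h)) *\<^sub>R ?D h"
      have nc: "norm c = 1" using False by (simp add: c_def)
      have cD: "c \<bullet> ?D h = norm (?D h)"
        using False by (simp add: c_def power2_norm_eq_inner[symmetric] power2_eq_square)
      show ?thesis
      proof (rule ccontr)
        assume "\<not> ?thesis"
        hence pos: "norm (?D h) - K * norm h > 0" by simp
        have "((\<lambda>t. c \<bullet> u (x + t *\<^sub>R h) - K * norm h * t) has_real_derivative
               c \<bullet> frechet_derivative u (at (x + 0 *\<^sub>R h)) h - K * norm h * 1) (at 0)"
          by (intro DERIV_diff scal_line1[OF du] DERIV_cmult DERIV_ident)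
        hence dd0: "((\<lambda>t. c \<bullet> u (x + t *\<^sub>R h) - K * norm h * t) has_real_derivative
               norm (?D h) - K * norm h) (at 0)" using cD by simp
        obtain d where d: "d > 0" "\<And>t. t > 0 \<Longrightarrow> t < d \<Longrightarrow>
             c \<bullet> u (x + 0 *\<^sub>R h) - K * norm h * 0 < c \<bullet> u (x + (0 + t) *\<^sub>R h) - K * norm h * (0 + t)"
          using DERIV_pos_inc_right[OF dd0 pos] by auto
        have "c \<bullet> u x < c \<bullet> u (x + (d/2) *\<^sub>R h) - K * norm h * (d/2)" using d(2)[of "d/2"] d(1) by simp
        hence "c \<bullet> (u (x + (d/2) *\<^sub>R h) - u x) > K * norm h * (d/2)" by (simp add: inner_diff_right)
        moreover have "c \<bullet> (u (x + (d/2) *\<^sub>R h) - u x) \<le> norm (u (x + (d/2) *\<^sub>R h) - u x)"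
          using inner_le_norm1[of c "u (x + (d/2) *\<^sub>R h) - u x"] nc by linarith
        moreover have "norm (u (x + (d/2) *\<^sub>R h) - u x) \<le> K * norm h * (d/2)"
          using lip[of "x + (d/2) *\<^sub>R h"] d(1) by (simp add: mult_ac)
        ultimately show False by simp
      qed
    qed
  qed
qed



theorem mainTheorem5:
  fixes \<mu> :: "real^2 \<Rightarrow> real" and \<mu>_rad :: "real \<Rightarrow> real"
    and f :: "real^2 \<Rightarrow> real^2" and f_rad :: "real \<Rightarrow> real"
  assumes mu_def: "\<And>x. \<mu> x = \<mu>_rad (norm x)"
    and mu_smooth: "smooth_real \<mu>_rad"
    and mu_even: "\<And>r. \<mu>_rad (- r) = \<mu>_rad r"
    and mu_bdd: "bounded (range \<mu>)"
    and mu_decr: "\<And>r. r > 0 \<Longrightarrow> deriv \<mu>_rad r < 0"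
    and mu_zero: "\<exists>!\<rho>. \<rho> > 0 \<and> \<mu>_rad \<rho> = 0"
    and f_def: "\<And>x. f x = (f_rad (norm x) / norm x) *\<^sub>R x"
    and f_smooth: "smooth_real f_rad"
    and f_odd: "\<And>r. f_rad (- r) = - f_rad r"
    and f_L1: "integrable lborel f"
    and f_bdd: "bounded (range f)"
    and f_pos: "\<And>r. r > 0 \<Longrightarrow> f_rad r > 0"
    and M_nonneg: "M \<ge> 0"
  shows "\<exists>C. \<forall>\<epsilon> a u. \<epsilon> > 0 \<longrightarrow> a \<ge> 0 \<longrightarrow> \<epsilon> * a \<le> M \<longrightarrow> is_solution \<mu> f \<epsilon> a u \<longrightarrow>
           (\<forall>x. norm (u x) \<le> C \<and> \<epsilon> * onorm (frechet_derivative u (at x)) \<le> C)"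
proof -
  obtain Bm where Bm: "\<And>x. \<bar>\<mu> x\<bar> \<le> Bm"
    using mu_bdd unfolding bounded_iff by auto
  obtain F where F: "\<And>x. norm (f x) \<le> F"
    using f_bdd unfolding bounded_iff by auto
  have Bm0: "Bm \<ge> 0" using Bm[of 0] by simp
  have F0: "F \<ge> 0" using F[of 0] norm_ge_zero order_trans by blast
  define A where "A = 1 + Bm + M * F"
  define B where "B = Bm * A + A ^ 3 + M * F"
  define L where "L = 4 * A + B + 1"
  have A0: "A \<ge> 0" using Bm0 F0 M_nonneg by (simp add: A_def)
  have L0: "L \<ge> 0" using A0 Bm0 F0 M_nonneg by (simp add: L_def B_def)
  show ?thesis
  proof (intro exI[of _ "A + L"] allI impI)
    fix \<epsilon> a :: real and u :: "real^2 \<Rightarrow> real^2" and x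
    assume ep: "\<epsilon> > 0" and a: "a \<ge> 0" and aM: "\<epsilon> * a \<le> M" and sol: "is_solution \<mu> f \<epsilon> a u"
    have du: "\<forall>x. u differentiable (at x)"
      and dd: "\<forall>i\<in>Basis. \<forall>x. partial u i differentiable (at x)"
      and eq: "\<And>x. \<epsilon>\<^sup>2 *\<^sub>R laplacian u x + \<mu> x *\<^sub>R u x - (norm (u x))\<^sup>2 *\<^sub>R u x + (\<epsilon> * a) *\<^sub>R f x = 0"
      and lim: "(u \<longlongrightarrow> 0) at_infinity"
      using sol unfolding is_solution_def by auto
    have uA: "norm (u z) \<le> A" for z
      unfolding A_def by (rule sup_bound[OF sol ep a aM Bm F M_nonneg])
    have lapB: "norm (\<epsilon>\<^sup>2 *\<^sub>R laplacian u z) \<le> B" for z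
    proof -
      have "\<epsilon>\<^sup>2 *\<^sub>R laplacian u z = - (\<mu> z *\<^sub>R u z) + (norm (u z))\<^sup>2 *\<^sub>R u z - (\<epsilon> * a) *\<^sub>R f z"
        using eq[of z] by (simp add: algebra_simps eq_neg_iff_add_eq_0)
      moreover have "norm (- (\<mu> z *\<^sub>R u z) + (norm (u z))\<^sup>2 *\<^sub>R u z - (\<epsilon> * a) *\<^sub>R f z)
          \<le> norm (- (\<mu> z *\<^sub>R u z) + (norm (u z))\<^sup>2 *\<^sub>R u z) + norm ((\<epsilon> * a) *\<^sub>R f z)"
        by (rule norm_triangle_ineq4)
      moreover have "norm (- (\<mu> z *\<^sub>R u z) + (norm (u z))\<^sup>2 *\<^sub>R u z)
          \<le> norm (- (\<mu> z *\<^sub>R u z)) + norm ((norm (u z))\<^sup>2 *\<^sub>R u z)"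
        by (rule norm_triangle_ineq)
      ultimately have "norm (\<epsilon>\<^sup>2 *\<^sub>R laplacian u z) \<le> norm (\<mu> z *\<^sub>R u z) + norm ((norm (u z))\<^sup>2 *\<^sub>R u z) + norm ((\<epsilon> * a) *\<^sub>R f z)"
        by (simp only: norm_minus_cancel)
      moreover have "norm (\<mu> z *\<^sub>R u z) \<le> Bm * A"
        using Bm[of z] uA[of z] by (simp add: mult_mono Bm0)
      moreover have "norm ((norm (u z))\<^sup>2 *\<^sub>R u z) \<le> A ^ 3"
      proof -
        have "norm ((norm (u z))\<^sup>2 *\<^sub>R u z) = norm (u z) ^ 3" by (simp add: power2_eq_square power3_eq_cube)
        also have "\<dots> \<le> A ^ 3" using uA[of z] by (intro power_mono) auto
        finally show ?thesis .
      qed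
      moreover have "norm ((\<epsilon> * a) *\<^sub>R f z) \<le> M * F"
        using ep a aM F[of z] M_nonneg by (simp add: abs_mult) (rule mult_mono, auto)
      ultimately show ?thesis unfolding B_def by linarith
    qed
    have lipc: "c \<bullet> u y - c \<bullet> u w \<le> L * (1 - exp (- (norm (y - w) / \<epsilon>)))" if "norm c \<le> 1" for c y w
      by (rule lip_main[OF du dd lim ep uA lapB L_def that])
    have lip: "norm (u y - u x) \<le> (L / \<epsilon>) * norm (y - x)" for y
    proof (cases "u y = u x")
      case True thus ?thesis using L0 ep by simp
    next
      case False
      define c where "c = (1 / norm (u y - u x)) *\<^sub>R (u y - u x)"
      have "norm c \<le> 1" using False by (simp add: c_def)
      hence "c \<bullet> u y - c \<bullet> u x \<le> L * (1 - exp (- (norm (y - x) / \<epsilon>)))" by (rule lipc)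
      moreover have "c \<bullet> u y - c \<bullet> u x = norm (u y - u x)"
        using False unfolding inner_diff_right[symmetric] c_def
        by (simp add: power2_norm_eq_inner[symmetric] power2_eq_square)
      moreover have "1 - exp (- (norm (y - x) / \<epsilon>)) \<le> norm (y - x) / \<epsilon>"
        using exp_ge_add_one_self[of "- (norm (y - x) / \<epsilon>)"] by simp
      moreover have "L * (1 - exp (- (norm (y - x) / \<epsilon>))) \<le> L * (norm (y - x) / \<epsilon>)"
        using calculation(3) L0 by (rule mult_left_mono)
      ultimately have "norm (u y - u x) \<le> L * (norm (y - x) / \<epsilon>)" by linarith
      thus ?thesis by simp
    qed
    have "onorm (frechet_derivative u (at x)) \<le> L / \<epsilon>"
      by (rule onorm_from_lip[OF du lip])
    hence "\<epsilon> * onorm (frechet_derivative u (at x)) \<le> L" using ep by (simp add: field_simps)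
    thus "norm (u x) \<le> A + L \<and> \<epsilon> * onorm (frechet_derivative u (at x)) \<le> A + L"
      using uA[of x] A0 L0 by simp
  qed
qed

end
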